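(* Let $\Omega=(\omega_1,\dots,\omega_N)\in\mathbb{R}^N\setminus\{0\}$ and $\|\Omega\|_\infty=\max_i|\omega_i|$. Let $u_*\in[\|\Omega\|_\infty,\frac2{\sqrt3}\|\Omega\|_\infty]$ be the solution of \[ N+2\sum_{j=1}^N\sqrt{1-\frac{\omega_j^2}{u_*^2}}=\sum_{j=1}^N\frac{1}{\sqrt{1-\frac{\omega_j^2}{u_*^2}}}, \] and set $\kappa_c(\Omega)=\dfrac{Nu_*}{N+\sum_{j=1}^N\sqrt{1-\omega_j^2/u_*^2}}$. Then for $\kappa>0$, the system $\dot\theta_i=\omega_i-\frac{\kappa}{N}\sum_{j=1}^N(1+\cos\theta_j)\sin\theta_i$ admits an equilibrium if and only if $\kappa\ge\kappa_c(\Omega)$; in particular $\kappa_c(\Omega)=\inf\{\kappa_*>0:\text{for all }\kappa>\kappa_*\text{ the system admits an equilibrium}\}$. Moreover \[ \frac{2N\|\Omega\|_\infty}{4N-1}\le\frac{16N\|\Omega\|_\infty}{(6N-3+\sqrt{4N^2-4N+9})\sqrt{5-2N+\sqrt{4N^2-4N+9}}\sqrt{3+2N-\sqrt{4N^2-4N+9}}}\le\kappa_c(\Omega)\le\frac{4}{3\sqrt3}\|\Omega\|_\infty, \] with equality in the second inequality when $\omega_i=0$ for all but at most one $i$, and equality in the third when $|\omega_i|=\|\Omega\|_\infty$ for all $i$.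
   Context: An equilibrium is $\Theta\in\mathbb{R}^N$ at which all right-hand sides vanish. *)

theory Defs
  imports "HOL-Analysis.Analysis"
begin

text \<open>Natural frequencies \<Omega> = (\<omega>_1,...,\<omega>_N) are vectors in real^'n, N = CARD('n).
  The sup-norm is the library's infnorm.\<close>

definition ustar_eq :: "real^'n \<Rightarrow> real \<Rightarrow> bool" where
  "ustar_eq \<Omega> u \<longleftrightarrow>
     real CARD('n) + 2 * (\<Sum>j\<in>UNIV. sqrt (1 - (\<Omega>$j)^2 / u^2))
       = (\<Sum>j\<in>UNIV. 1 / sqrt (1 - (\<Omega>$j)^2 / u^2))"

definition kappa_c :: "real^'n \<Rightarrow> real \<Rightarrow> real" where
  "kappa_c \<Omega> u =
     real CARD('n) * u / (real CARD('n) + (\<Sum>j\<in>UNIV. sqrt (1 - (\<Omega>$j)^2 / u^2)))"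

definition is_equilibrium :: "real^'n \<Rightarrow> real \<Rightarrow> real^'n \<Rightarrow> bool" where
  "is_equilibrium \<Omega> \<kappa> \<Theta> \<longleftrightarrow>
     (\<forall>i. \<Omega>$i - \<kappa> / real CARD('n) * (\<Sum>j\<in>UNIV. (1 + cos (\<Theta>$j)) * sin (\<Theta>$i)) = 0)"

definition has_equilibrium :: "real^'n \<Rightarrow> real \<Rightarrow> bool" where
  "has_equilibrium \<Omega> \<kappa> \<longleftrightarrow> (\<exists>\<Theta>. is_equilibrium \<Omega> \<kappa> \<Theta>)"

end

theory Submission
  imports Defs
begin

lemma sqrt_tangent_aux:
  fixes a b :: real
  assumes b: "b > 0"
  shows "a \<le> b + (a^2 - b^2) / (2 * b)"
proof -
  have "b + (a^2 - b^2) / (2 * b) - a = (a-b)^2/(2*b)"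
    using b by (simp add: field_simps power2_eq_square)
  moreover have "(a-b)^2/(2*b) \<ge> 0" using b by simp
  ultimately show ?thesis by linarith
qed

lemma sqrt_tangent:
  fixes x y :: real
  assumes "0 \<le> x" "0 < y"
  shows "sqrt x \<le> sqrt y + (x - y) / (2 * sqrt y)"
  using sqrt_tangent_aux[of "sqrt y" "sqrt x"] assms by simp

lemma t2: fixes x u :: real assumes "\<bar>x\<bar> < u" shows "x^2 < u^2"
  using assms abs_le_square_iff[of u x] by auto
lemma t3: fixes w u R c k :: real assumes c: "c > 0" and u: "u > 0" and R: "R>0" and e: "w^2 = u^2 * (1 - c^2)"
  and k: "k = (1 - u^2/R^2)/2"
  shows "((1 - w^2/R^2) - (1 - w^2/u^2)) / (2 * c) = k * (1/c - c)"
proof -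
  have 1: "1/c - c = (1-c^2)/c" using c by (simp add: field_simps power2_eq_square)
  have 2: "w^2/u^2 = 1 - c^2" using e u by simp
  have 3: "w^2/R^2 = (u^2/R^2) * (1 - c^2)" using e by simp
  show ?thesis unfolding 1 2 3 k by (simp add: field_simps)
qed
lemma t4: fixes R u k :: real assumes R: "R>0" and k: "k = (1 - u^2/R^2)/2"
  shows "R - u * (1 + k) = (R - u)^2 * (2*R + u) / (2 * R^2)"
  unfolding k using R by (simp add: field_simps power2_eq_square power3_eq_cube)

lemma key:
  fixes \<Omega> :: "real^'n"
  assumes R: "\<And>j. \<bar>\<Omega>$j\<bar> \<le> R" and Rpos: "0 < R" and u: "\<And>j. \<bar>\<Omega>$j\<bar> < u"
    and ue: "ustar_eq \<Omega> u"
  shows "u * (real CARD('n) + (\<Sum>j\<in>UNIV. sqrt (1 - (\<Omega>$j)^2 / R^2)))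
      \<le> R * (real CARD('n) + (\<Sum>j\<in>UNIV. sqrt (1 - (\<Omega>$j)^2 / u^2)))"
    and "R \<noteq> u \<Longrightarrow> u * (real CARD('n) + (\<Sum>j\<in>UNIV. sqrt (1 - (\<Omega>$j)^2 / R^2)))
      < R * (real CARD('n) + (\<Sum>j\<in>UNIV. sqrt (1 - (\<Omega>$j)^2 / u^2)))"
proof -
  define cu where "cu = (\<lambda>j. sqrt (1 - (\<Omega>$j)^2 / u^2))"
  define cR where "cR = (\<lambda>j. sqrt (1 - (\<Omega>$j)^2 / R^2))"
  define G where "G = real CARD('n) + sum cu UNIV"
  define k where "k = (1 - u^2/R^2)/2"
  have upos: "u > 0" using u[of undefined] by linarith
  have sq_lt: "(\<Omega>$j)^2 < u^2" for j
using t2 u by blast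
  have sq_le: "(\<Omega>$j)^2 \<le> R^2" for j
using R[of j] abs_le_square_iff[of "\<Omega>$j" R] Rpos by auto
  have frac_lt: "(\<Omega>$j)^2/u^2 < 1" for j using sq_lt[of j] upos by simp
  have fracR: "(\<Omega>$j)^2/R^2 \<le> 1" for j using sq_le[of j] Rpos by simp
  have cu_pos: "cu j > 0" for j using frac_lt[of j] unfolding cu_def by simp
  have cu_sq: "(cu j)^2 = 1 - (\<Omega>$j)^2/u^2" for j using frac_lt[of j] unfolding cu_def by simp
  have each: "cR j \<le> cu j + k * (1 / cu j - cu j)" for j
  proof -
    have "cR j \<le> cu j + ((1 - (\<Omega>$j)^2/R^2) - (1 - (\<Omega>$j)^2/u^2)) / (2 * cu j)"
      using sqrt_tangent[of "1 - (\<Omega>$j)^2/R^2" "1 - (\<Omega>$j)^2/u^2"] fracR[of j] frac_lt[of j]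
      unfolding cR_def cu_def by simp
    also have "((1 - (\<Omega>$j)^2/R^2) - (1 - (\<Omega>$j)^2/u^2)) / (2 * cu j) = k * (1/cu j - cu j)"
    proof -
      have e: "(\<Omega>$j)^2 = u^2 * (1 - (cu j)^2)" using cu_sq[of j] upos by (simp add: field_simps)
      show ?thesis using t3[OF cu_pos[of j] upos Rpos e k_def] .
    qed
    finally show ?thesis .
  qed
  have "sum cR UNIV \<le> sum (\<lambda>j. cu j + k * (1 / cu j - cu j)) UNIV"
    using sum_mono[of UNIV cR "\<lambda>j. cu j + k * (1 / cu j - cu j)", OF each] by simp
  moreover have "sum (\<lambda>j. cu j + k * (1 / cu j - cu j)) UNIV = sum cu UNIV + (\<Sum>i\<in>UNIV. k * (1 / cu i - cu i))"
    by (rule sum.distrib)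
  moreover have "(\<Sum>i\<in>UNIV. k * (1 / cu i - cu i)) = k * (sum (\<lambda>j. 1/cu j) UNIV - sum cu UNIV)"
    by (simp add: sum_distrib_left[symmetric] sum_subtractf)
  ultimately have sumle: "sum cR UNIV \<le> sum cu UNIV + k * (sum (\<lambda>j. 1/cu j) UNIV - sum cu UNIV)"
    by linarith
  have ue': "real CARD('n) + 2 * sum cu UNIV = sum (\<lambda>j. 1/cu j) UNIV"
    using ue unfolding ustar_eq_def cu_def by simp
  have dG: "sum (\<lambda>j. 1/cu j) UNIV - sum cu UNIV = G" using ue' unfolding G_def by simp
  have main: "real CARD('n) + sum cR UNIV \<le> G * (1 + k)"
    using sumle unfolding dG unfolding G_def by (simp add: algebra_simps)
  have Gpos: "G > 0" unfolding G_def using cu_pos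
    by (simp add: add_pos_nonneg less_imp_le sum_nonneg)
  have id: "R - u * (1 + k) = (R - u)^2 * (2*R + u) / (2 * R^2)"
using t4[OF Rpos k_def] .
  have "(R - u)^2 * (2*R + u) / (2 * R^2) \<ge> 0" using upos Rpos by simp
  hence ge: "u * (1 + k) \<le> R" using id by linarith
  have "u * (real CARD('n) + sum cR UNIV) \<le> u * (G * (1 + k))"
    using main upos by simp
  also have "\<dots> = G * (u * (1 + k))" by simp
  also have "\<dots> \<le> G * R" using ge Gpos by simp
  finally show "u * (real CARD('n) + (\<Sum>j\<in>UNIV. sqrt (1 - (\<Omega>$j)^2 / R^2)))
      \<le> R * (real CARD('n) + (\<Sum>j\<in>UNIV. sqrt (1 - (\<Omega>$j)^2 / u^2)))"
    unfolding G_def cR_def cu_def by (simp add: mult.commute)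
  assume "R \<noteq> u"
  hence "(R - u)^2 * (2*R + u) / (2 * R^2) > 0" using upos Rpos by simp
  hence gt: "u * (1 + k) < R" using id by linarith
  have "u * (real CARD('n) + sum cR UNIV) \<le> u * (G * (1 + k))"
    using main upos by simp
  also have "\<dots> = G * (u * (1 + k))" by simp
  also have "\<dots> < G * R" using gt Gpos by simp
  finally show "u * (real CARD('n) + (\<Sum>j\<in>UNIV. sqrt (1 - (\<Omega>$j)^2 / R^2)))
      < R * (real CARD('n) + (\<Sum>j\<in>UNIV. sqrt (1 - (\<Omega>$j)^2 / u^2)))"
    unfolding G_def cR_def cu_def by (simp add: mult.commute)
qed


lemma g_le2:
  fixes \<Omega> :: "real^'n"
  shows "real CARD('n) + (\<Sum>j\<in>UNIV. sqrt (1 - (\<Omega>$j)^2 / R^2)) \<le> 2 * real CARD('n)"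
proof -
  have "(\<Sum>j\<in>UNIV. sqrt (1 - (\<Omega>$j)^2 / R^2)) \<le> (\<Sum>j\<in>(UNIV::'n set). 1)"
    by (intro sum_mono) simp
  thus ?thesis by simp
qed

lemma g_geN:
  fixes \<Omega> :: "real^'n"
  assumes "\<And>j. \<bar>\<Omega>$j\<bar> \<le> R" "0 < R"
  shows "real CARD('n) \<le> real CARD('n) + (\<Sum>j\<in>UNIV. sqrt (1 - (\<Omega>$j)^2 / R^2))"
proof -
  have "(\<Omega>$j)^2 / R^2 \<le> 1" for j
    using assms(1)[of j] abs_le_square_iff[of "\<Omega>$j" R] assms(2) by auto
  hence "0 \<le> (\<Sum>j\<in>UNIV. sqrt (1 - (\<Omega>$j)^2 / R^2))"
    by (intro sum_nonneg) simp
  thus ?thesis by simp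
qed

lemma kappa_pos:
  fixes \<Omega> :: "real^'n"
  assumes "\<And>j. \<bar>\<Omega>$j\<bar> \<le> R" "0 < R"
  shows "kappa_c \<Omega> R > 0"
proof -
  have "real CARD('n) > 0" by simp
  thus ?thesis unfolding kappa_c_def using g_geN[OF assms] assms(2)
    by (intro divide_pos_pos mult_pos_pos) (auto intro: add_pos_nonneg)
qed

lemma kappa_mono:
  fixes \<Omega> :: "real^'n"
  assumes R: "\<And>j. \<bar>\<Omega>$j\<bar> \<le> R" and Rpos: "0 < R" and u: "\<And>j. \<bar>\<Omega>$j\<bar> < u"
    and ue: "ustar_eq \<Omega> u"
  shows "kappa_c \<Omega> u \<le> kappa_c \<Omega> R" and "R \<noteq> u \<Longrightarrow> kappa_c \<Omega> u < kappa_c \<Omega> R"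
proof -
  define gR where "gR = real CARD('n) + (\<Sum>j\<in>UNIV. sqrt (1 - (\<Omega>$j)^2 / R^2))"
  define gu where "gu = real CARD('n) + (\<Sum>j\<in>UNIV. sqrt (1 - (\<Omega>$j)^2 / u^2))"
  have upos: "u > 0" using u[of undefined] by linarith
  have u': "\<And>j. \<bar>\<Omega>$j\<bar> \<le> u" using u less_imp_le by blast
  have N: "real CARD('n) > 0" by simp
  have gR: "gR > 0" unfolding gR_def using g_geN[OF R Rpos] N by linarith
  have gu: "gu > 0" unfolding gu_def using g_geN[OF u' upos] N by linarith
  have k1: "u * gR \<le> R * gu" using key(1)[OF R Rpos u ue] unfolding gR_def gu_def .
  have eq1: "kappa_c \<Omega> u = real CARD('n) * u / gu" unfolding kappa_c_def gu_def ..
  have eq2: "kappa_c \<Omega> R = real CARD('n) * R / gR" unfolding kappa_c_def gR_def ..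
  have "real CARD('n) * u / gu \<le> real CARD('n) * R / gR"
    using k1 gR gu N by (simp add: divide_simps mult.commute mult.left_commute)
  thus "kappa_c \<Omega> u \<le> kappa_c \<Omega> R" using eq1 eq2 by simp
  assume "R \<noteq> u"
  have k2: "u * gR < R * gu" using key(2)[OF R Rpos u ue \<open>R \<noteq> u\<close>] unfolding gR_def gu_def .
  have "real CARD('n) * u / gu < real CARD('n) * R / gR"
    using k2 gR gu N by (simp add: divide_simps mult.commute mult.left_commute)
  thus "kappa_c \<Omega> u < kappa_c \<Omega> R" using eq1 eq2 by simp
qed

lemma equilibrium_from:
  fixes \<Omega> :: "real^'n"
  assumes R: "\<And>j. \<bar>\<Omega>$j\<bar> \<le> R" and Rpos: "0 < R"
    and k: "\<kappa> * (real CARD('n) + (\<Sum>j\<in>UNIV. sqrt (1 - (\<Omega>$j)^2 / R^2))) = real CARD('n) * R"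
  shows "has_equilibrium \<Omega> \<kappa>"
proof -
  define \<Theta> where "\<Theta> = (\<chi> j. arcsin (\<Omega>$j / R))"
  have b: "-1 \<le> \<Omega>$j / R \<and> \<Omega>$j / R \<le> 1" for j
    using R[of j] Rpos by (auto simp: divide_simps abs_le_iff)
  have sinT: "sin (\<Theta>$j) = \<Omega>$j / R" for j unfolding \<Theta>_def using b[of j] by simp
  have cosT: "cos (\<Theta>$j) = sqrt (1 - (\<Omega>$j)^2 / R^2)" for j
    unfolding \<Theta>_def using b[of j] by (simp add: cos_arcsin power_divide)
  have S: "(\<Sum>j\<in>UNIV. 1 + cos (\<Theta>$j)) = real CARD('n) + (\<Sum>j\<in>UNIV. sqrt (1 - (\<Omega>$j)^2 / R^2))"
    by (simp add: cosT sum.distrib)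
  have "is_equilibrium \<Omega> \<kappa> \<Theta>"
    unfolding is_equilibrium_def
  proof
    fix i
    have "(\<Sum>j\<in>UNIV. (1 + cos (\<Theta>$j)) * sin (\<Theta>$i)) = (\<Sum>j\<in>UNIV. 1 + cos (\<Theta>$j)) * sin (\<Theta>$i)"
      by (simp add: sum_distrib_right)
    also have "\<dots> = (real CARD('n) + (\<Sum>j\<in>UNIV. sqrt (1 - (\<Omega>$j)^2 / R^2))) * (\<Omega>$i / R)"
      using S sinT by simp
    finally have e: "\<kappa> / real CARD('n) * (\<Sum>j\<in>UNIV. (1 + cos (\<Theta>$j)) * sin (\<Theta>$i))
       = \<kappa> * (real CARD('n) + (\<Sum>j\<in>UNIV. sqrt (1 - (\<Omega>$j)^2 / R^2))) * \<Omega>$i / (R * real CARD('n))"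
      by (simp add: ac_simps)
    show "\<Omega>$i - \<kappa> / real CARD('n) * (\<Sum>j\<in>UNIV. (1 + cos (\<Theta>$j)) * sin (\<Theta>$i)) = 0"
      unfolding e k using Rpos by simp
  qed
  thus ?thesis unfolding has_equilibrium_def by blast
qed

lemma equilibrium_to:
  fixes \<Omega> :: "real^'n"
  assumes k: "\<kappa> > 0" and nz: "\<Omega> \<noteq> 0" and eq: "is_equilibrium \<Omega> \<kappa> \<Theta>"
  shows "\<exists>R>0. (\<forall>j. \<bar>\<Omega>$j\<bar> \<le> R) \<and> kappa_c \<Omega> R \<le> \<kappa>"
proof -
  define N where "N = real CARD('n)"
  have N: "N > 0" unfolding N_def by simp
  define S where "S = (\<Sum>j\<in>UNIV. 1 + cos (\<Theta>$j))"
  define R where "R = \<kappa> * S / N"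
  have om: "\<Omega>$i = R * sin (\<Theta>$i)" for i
  proof -
    have "\<Omega>$i = \<kappa> / N * (\<Sum>j\<in>UNIV. (1 + cos (\<Theta>$j)) * sin (\<Theta>$i))"
      using eq unfolding is_equilibrium_def N_def by (metis eq_iff_diff_eq_0)
    also have "\<dots> = \<kappa> / N * (S * sin (\<Theta>$i))" unfolding S_def by (simp add: sum_distrib_right)
    finally show ?thesis unfolding R_def by simp
  qed
  have S0: "S \<ge> 0" unfolding S_def
  proof (intro sum_nonneg)
    fix x show "0 \<le> 1 + cos (\<Theta>$x)" using cos_ge_minus_one[of "\<Theta>$x"] by linarith
  qed
  obtain i0 where i0: "\<Omega>$i0 \<noteq> 0" using nz by (metis vec_eq_iff zero_index)
  have "R \<noteq> 0" using om[of i0] i0 by auto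
  moreover have "R \<ge> 0" unfolding R_def using S0 k N by simp
  ultimately have Rpos: "R > 0" by simp
  have Spos: "S > 0" using Rpos k N unfolding R_def by (simp add: zero_less_divide_iff zero_less_mult_iff)
  have bnd: "\<bar>\<Omega>$j\<bar> \<le> R" for j
    using om[of j] Rpos abs_sin_le_one[of "\<Theta>$j"] by (simp add: abs_mult mult_left_le)
  have sinj: "sin (\<Theta>$j) = \<Omega>$j / R" for j using om[of j] Rpos by simp
  have cosj: "cos (\<Theta>$j) \<le> sqrt (1 - (\<Omega>$j)^2 / R^2)" for j
  proof -
    have "cos (\<Theta>$j) \<le> sqrt ((cos (\<Theta>$j))^2)" by simp
    also have "(cos (\<Theta>$j))^2 = 1 - (\<Omega>$j)^2 / R^2"
      using sin_squared_eq[of "\<Theta>$j"] sinj[of j] by (simp add: power_divide cos_squared_eq)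
    finally show ?thesis .
  qed
  define g where "g = N + (\<Sum>j\<in>UNIV. sqrt (1 - (\<Omega>$j)^2 / R^2))"
  have Sg: "S \<le> g" unfolding S_def g_def N_def
    using sum_mono[of UNIV "\<lambda>j. cos (\<Theta>$j)" "\<lambda>j. sqrt (1 - (\<Omega>$j)^2 / R^2)", OF cosj]
    by (simp add: sum.distrib)
  have "kappa_c \<Omega> R = N * R / g" unfolding kappa_c_def g_def N_def ..
  also have "\<dots> = \<kappa> * S / g" unfolding R_def using N by simp
  also have "\<dots> \<le> \<kappa>" using Sg Spos k by (simp add: divide_simps)
  finally show ?thesis using Rpos bnd by blast
qed

lemma poly_ineq:
  fixes a s z :: real
  assumes a: "a \<ge> 1" and s: "s \<ge> 0" and z: "z \<ge> 0" and E: "2 * z^2 + a * z - 1 = 0"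
  shows "(1 - s^2) * (a + s)^2 \<le> (1 - z^2) * (a + z)^2"
proof -
  have id: "(1 - z^2) * (a + z)^2 - (1 - s^2) * (a + s)^2
     = (s - z)^2 * (s^2 + (2*a + 2*z) * s + (a^2 - 1) + 4*a*z + 3*z^2)
       - 2 * (z + a) * (z - s) * (2 * z^2 + a * z - 1)"
    by (simp add: algebra_simps power2_eq_square)
  have "1 * 1 \<le> a * a" using a by (intro mult_mono) auto
  hence "a^2 - 1 \<ge> 0" by (simp add: power2_eq_square)
  hence "s^2 + (2*a + 2*z) * s + (a^2 - 1) + 4*a*z + 3*z^2 \<ge> 0"
    using a s z by (simp add: add_nonneg_nonneg)
  hence "(s - z)^2 * (s^2 + (2*a + 2*z) * s + (a^2 - 1) + 4*a*z + 3*z^2) \<ge> 0" by simp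
  thus ?thesis using id E by simp
qed

lemma z_facts:
  fixes n :: real
  assumes n: "n \<ge> 1" and a_def: "a = 2*n - 1"
    and z_def: "z = (sqrt (4 * n^2 - 4 * n + 9) - a) / 4"
  shows "2 * z^2 + a * z - 1 = 0" "0 < z" "z \<le> 1/2"
    "6 * n - 3 + sqrt (4 * n^2 - 4 * n + 9) = 4 * (a + z)" "5 - 2 * n + sqrt (4 * n^2 - 4 * n + 9) = 4 * (1 + z)"
    "3 + 2 * n - sqrt (4 * n^2 - 4 * n + 9) = 4 * (1 - z)"
proof -
  define D where "D = 4 * n^2 - 4 * n + 9"
  have zD: "z = (sqrt D - a) / 4" unfolding z_def D_def ..
  have Da: "D = a^2 + 8" unfolding D_def a_def by (simp add: power2_eq_square algebra_simps)
  have D0: "D > 0" using Da by (simp add: add_nonneg_pos)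
  have sq: "(sqrt D)^2 = D" using D0 by simp
  have gen: "2*((r-a)/4)^2 + a*((r-a)/4) - 1 = (r^2 - a^2 - 8)/8" for r
    by (simp add: field_simps power2_eq_square)
  show "2 * z^2 + a * z - 1 = 0" unfolding zD gen sq Da by simp
  have a0: "a \<ge> 1" unfolding a_def using n by simp
  have "a < sqrt D" using Da a0 by (intro real_less_rsqrt) simp
  thus "0 < z" unfolding zD by simp
  have "sqrt D \<le> a + 2"
  proof (rule real_le_lsqrt)
    show "0 \<le> a + 2" using a0 by simp
    show "D \<le> (a + 2)^2" using Da a0 by (simp add: power2_eq_square algebra_simps)
  qed
  thus "z \<le> 1/2" unfolding zD by simp
  show "6 * n - 3 + sqrt (4 * n^2 - 4 * n + 9) = 4 * (a + z)" "5 - 2 * n + sqrt (4 * n^2 - 4 * n + 9) = 4 * (1 + z)"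
    "3 + 2 * n - sqrt (4 * n^2 - 4 * n + 9) = 4 * (1 - z)" unfolding z_def a_def by (simp_all add: field_simps)
qed

lemma LB:
  fixes a z m R :: real
  assumes a: "a \<ge> 1" and z: "0 \<le> z" "z < 1" and E: "2 * z^2 + a * z - 1 = 0"
    and m: "0 < m" "m \<le> R"
  shows "m * (a + sqrt (1 - m^2/R^2)) \<le> R * ((a + z) * sqrt (1 - z^2))"
proof -
  define s where "s = sqrt (1 - m^2/R^2)"
  have R: "R > 0" using m by simp
  have mr: "m^2/R^2 \<le> 1" using m R by (simp add: power_mono)
  have s_nn: "s \<ge> 0" unfolding s_def using mr by simp
  have ss: "s^2 = 1 - m^2/R^2" unfolding s_def using mr by simp
  have "1 - s^2 = (m/R)^2" using ss by (simp add: power_divide)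
  hence mR: "m / R = sqrt (1 - s^2)" using m R by simp
  have "m / R * (a + s) = sqrt ((1 - s^2) * (a + s)^2)"
    using mR a s_nn by (simp add: real_sqrt_mult)
  also have "\<dots> \<le> sqrt ((1 - z^2) * (a + z)^2)"
    using poly_ineq[OF a s_nn z(1) E] by simp
  also have "\<dots> = (a + z) * sqrt (1 - z^2)"
    using a z by (simp add: real_sqrt_mult)
  finally have "m / R * (a + s) \<le> (a + z) * sqrt (1 - z^2)" .
  hence "m * (a + s) \<le> R * ((a + z) * sqrt (1 - z^2))" using R
    by (simp add: divide_simps mult.commute)
  thus ?thesis unfolding s_def .
qed


lemma g_upper:
  fixes \<Omega> :: "real^'n"
  shows "real CARD('n) + (\<Sum>j\<in>UNIV. sqrt (1 - (\<Omega>$j)^2 / R^2))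
     \<le> (2 * real CARD('n) - 1) + sqrt (1 - (\<Omega>$i0)^2 / R^2)"
    and "(\<forall>j. j \<noteq> i0 \<longrightarrow> \<Omega>$j = 0) \<Longrightarrow> real CARD('n) + (\<Sum>j\<in>UNIV. sqrt (1 - (\<Omega>$j)^2 / R^2))
     = (2 * real CARD('n) - 1) + sqrt (1 - (\<Omega>$i0)^2 / R^2)"
proof -
  have split: "(\<Sum>j\<in>UNIV. sqrt (1 - (\<Omega>$j)^2 / R^2)) = sqrt (1 - (\<Omega>$i0)^2 / R^2)
      + (\<Sum>j\<in>UNIV-{i0}. sqrt (1 - (\<Omega>$j)^2 / R^2))"
    by (rule sum.remove) auto
  have c: "real (card (UNIV - {i0} :: 'n set)) = real CARD('n) - 1"
    by (simp add: card_Diff_singleton of_nat_diff Suc_le_eq)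
  have "(\<Sum>j\<in>UNIV-{i0}. sqrt (1 - (\<Omega>$j)^2 / R^2)) \<le> (\<Sum>j\<in>UNIV-{i0}. (1::real))"
    by (intro sum_mono) simp
  thus "real CARD('n) + (\<Sum>j\<in>UNIV. sqrt (1 - (\<Omega>$j)^2 / R^2))
     \<le> (2 * real CARD('n) - 1) + sqrt (1 - (\<Omega>$i0)^2 / R^2)" using split c by simp
  assume z: "\<forall>j. j \<noteq> i0 \<longrightarrow> \<Omega>$j = 0"
  have "(\<Sum>j\<in>UNIV-{i0}. sqrt (1 - (\<Omega>$j)^2 / R^2)) = (\<Sum>j\<in>UNIV-{i0}. (1::real))"
    by (intro sum.cong) (auto simp: z)
  thus "real CARD('n) + (\<Sum>j\<in>UNIV. sqrt (1 - (\<Omega>$j)^2 / R^2))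
     = (2 * real CARD('n) - 1) + sqrt (1 - (\<Omega>$i0)^2 / R^2)" using split c by simp
qed

lemma infnorm_attained:
  fixes \<Omega> :: "real^'n"
  shows "\<exists>i. \<bar>\<Omega>$i\<bar> = infnorm \<Omega>"
proof -
  have e: "{\<bar>\<Omega>$i\<bar> |i. i \<in> UNIV} = range (\<lambda>i. \<bar>\<Omega>$i\<bar>)" by auto
  have "Sup (range (\<lambda>i. \<bar>\<Omega>$i\<bar>)) \<in> range (\<lambda>i. \<bar>\<Omega>$i\<bar>)"
    by (simp add: cSup_eq_Max)
  thus ?thesis unfolding infnorm_cart e by auto
qed

lemma sqrt4: "sqrt (4 * t) = 2 * sqrt t"
  by (simp add: real_sqrt_mult)

theorem proposition6p3:
  fixes \<Omega> :: "real^'n" and u :: real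
  defines "N \<equiv> real CARD('n)"
  assumes nz: "\<Omega> \<noteq> 0"
    and u_lo: "infnorm \<Omega> < u"
    and u_hi: "u \<le> 2 / sqrt 3 * infnorm \<Omega>"
    and u_eq: "ustar_eq \<Omega> u"
  shows "(\<exists>!v. infnorm \<Omega> < v \<and> v \<le> 2 / sqrt 3 * infnorm \<Omega> \<and> ustar_eq \<Omega> v)
    \<and> (\<forall>\<kappa>>0. has_equilibrium \<Omega> \<kappa> \<longleftrightarrow> \<kappa> \<ge> kappa_c \<Omega> u)
    \<and> kappa_c \<Omega> u = Inf {\<kappa>s. \<kappa>s > 0 \<and> (\<forall>\<kappa>>\<kappa>s. has_equilibrium \<Omega> \<kappa>)}
    \<and> 2 * N * infnorm \<Omega> / (4 * N - 1)
        \<le> 16 * N * infnorm \<Omega> /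
            ((6 * N - 3 + sqrt (4 * N^2 - 4 * N + 9))
             * sqrt (5 - 2 * N + sqrt (4 * N^2 - 4 * N + 9))
             * sqrt (3 + 2 * N - sqrt (4 * N^2 - 4 * N + 9)))
    \<and> 16 * N * infnorm \<Omega> /
            ((6 * N - 3 + sqrt (4 * N^2 - 4 * N + 9))
             * sqrt (5 - 2 * N + sqrt (4 * N^2 - 4 * N + 9))
             * sqrt (3 + 2 * N - sqrt (4 * N^2 - 4 * N + 9)))
        \<le> kappa_c \<Omega> u
    \<and> kappa_c \<Omega> u \<le> 4 / (3 * sqrt 3) * infnorm \<Omega>
    \<and> (card {i. \<Omega>$i \<noteq> 0} \<le> 1 \<longrightarrow>
         16 * N * infnorm \<Omega> /
            ((6 * N - 3 + sqrt (4 * N^2 - 4 * N + 9))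
             * sqrt (5 - 2 * N + sqrt (4 * N^2 - 4 * N + 9))
             * sqrt (3 + 2 * N - sqrt (4 * N^2 - 4 * N + 9)))
         = kappa_c \<Omega> u)
    \<and> ((\<forall>i. \<bar>\<Omega>$i\<bar> = infnorm \<Omega>) \<longrightarrow> kappa_c \<Omega> u = 4 / (3 * sqrt 3) * infnorm \<Omega>)"
proof -
  define m where "m = infnorm \<Omega>"
  have Npos: "CARD('n) > 0" by simp
  have N1: "N \<ge> 1" unfolding N_def using Npos by linarith
  have comp: "\<And>j. \<bar>\<Omega>$j\<bar> \<le> m" unfolding m_def by (rule component_le_infnorm_cart)
  have mpos: "m > 0" unfolding m_def using nz infnorm_pos_lt by blast
  obtain i0 where i0: "\<bar>\<Omega>$i0\<bar> = m" using infnorm_attained[of \<Omega>] unfolding m_def by blast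
  have ulo: "\<And>j. \<bar>\<Omega>$j\<bar> < u" using comp u_lo unfolding m_def by (meson le_less_trans)
  have upos: "u > 0" using mpos u_lo unfolding m_def by linarith
  have ule: "\<And>j. \<bar>\<Omega>$j\<bar> \<le> u" using ulo less_imp_le by blast
  have P1u: "v = u" if v: "infnorm \<Omega> < v" "v \<le> 2 / sqrt 3 * infnorm \<Omega>" "ustar_eq \<Omega> v" for v
  proof (rule ccontr)
    assume vu: "v \<noteq> u"
    have vlo: "\<And>j. \<bar>\<Omega>$j\<bar> < v" using comp v unfolding m_def by (meson le_less_trans)
    have vle: "\<And>j. \<bar>\<Omega>$j\<bar> \<le> v" using vlo less_imp_le by blast
    have vpos: "v > 0" using mpos v unfolding m_def by linarith
    have "kappa_c \<Omega> u < kappa_c \<Omega> v" using kappa_mono(2)[OF vle vpos ulo u_eq vu] .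
    moreover have "u \<noteq> v" using vu by simp
    hence "kappa_c \<Omega> v < kappa_c \<Omega> u"
      using kappa_mono(2)[OF ule upos vlo v(3)] by simp
    ultimately show False by simp
  qed
  have P1: "\<exists>!v. infnorm \<Omega> < v \<and> v \<le> 2 / sqrt 3 * infnorm \<Omega> \<and> ustar_eq \<Omega> v"
  proof (rule ex1I[of _ u])
    show "infnorm \<Omega> < u \<and> u \<le> 2 / sqrt 3 * infnorm \<Omega> \<and> ustar_eq \<Omega> u"
      using u_lo u_hi u_eq by blast
    fix v assume "infnorm \<Omega> < v \<and> v \<le> 2 / sqrt 3 * infnorm \<Omega> \<and> ustar_eq \<Omega> v"
    thus "v = u" using P1u by blast
  qed
  have P2: "\<forall>\<kappa>>0. has_equilibrium \<Omega> \<kappa> \<longleftrightarrow> \<kappa> \<ge> kappa_c \<Omega> u"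
  proof (intro allI impI iffI)
    fix \<kappa> :: real assume k: "\<kappa> > 0"
    {
      assume "has_equilibrium \<Omega> \<kappa>"
      then obtain \<Theta> where "is_equilibrium \<Omega> \<kappa> \<Theta>" unfolding has_equilibrium_def by blast
      from equilibrium_to[OF k nz this] obtain R where R: "R > 0" "\<forall>j. \<bar>\<Omega>$j\<bar> \<le> R"
        "kappa_c \<Omega> R \<le> \<kappa>" by blast
      have "kappa_c \<Omega> u \<le> kappa_c \<Omega> R" using kappa_mono(1)[of \<Omega> R u] R ulo u_eq by blast
      thus "kappa_c \<Omega> u \<le> \<kappa>" using R by linarith
    }
    {
      assume kc: "kappa_c \<Omega> u \<le> \<kappa>"
      define h where "h = (\<lambda>R. \<kappa> * (real CARD('n) + (\<Sum>j\<in>UNIV. sqrt (1 - (\<Omega>$j)^2 / R^2)))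
          - real CARD('n) * R)"
      have cont: "continuous_on {u..u+2*\<kappa>} h" unfolding h_def
        using upos by (intro continuous_intros) auto
      define gu where "gu = real CARD('n) + (\<Sum>j\<in>UNIV. sqrt (1 - (\<Omega>$j)^2 / u^2))"
      have gu: "gu > 0" unfolding gu_def using g_geN[OF ule upos] Npos by linarith
      have "real CARD('n) * u / gu \<le> \<kappa>" using kc unfolding kappa_c_def gu_def .
      hence "real CARD('n) * u \<le> \<kappa> * gu" using gu by (simp add: divide_simps)
      hence ha: "0 \<le> h u" unfolding h_def gu_def by simp
      have "\<kappa> * (real CARD('n) + (\<Sum>j\<in>UNIV. sqrt (1 - (\<Omega>$j)^2 / (u+2*\<kappa>)^2)))
          \<le> \<kappa> * (2 * real CARD('n))"
        using g_le2[of \<Omega> "u+2*\<kappa>"] k by (intro mult_left_mono) auto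
      moreover have "0 \<le> u * real CARD('n)" using upos by simp
      ultimately have hb: "h (u+2*\<kappa>) \<le> 0" unfolding h_def
        by (simp add: algebra_simps)
      obtain R where R: "u \<le> R" "R \<le> u+2*\<kappa>" "h R = 0"
        using IVT2'[of h "u+2*\<kappa>" 0 u, OF hb ha _ cont] k by auto
      have Rb: "\<And>j. \<bar>\<Omega>$j\<bar> \<le> R" using ule R(1) order_trans by blast
      show "has_equilibrium \<Omega> \<kappa>"
        by (rule equilibrium_from[OF Rb]) (use R upos in \<open>auto simp: h_def\<close>)
    }
  qed
  define K where "K = kappa_c \<Omega> u"
  have Kpos: "K > 0" unfolding K_def using kappa_pos[OF ule upos] .
  have set: "{\<kappa>s. \<kappa>s > 0 \<and> (\<forall>\<kappa>>\<kappa>s. has_equilibrium \<Omega> \<kappa>)} = {K..}"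
  proof (intro set_eqI iffI)
    fix x assume "x \<in> {\<kappa>s. \<kappa>s > 0 \<and> (\<forall>\<kappa>>\<kappa>s. has_equilibrium \<Omega> \<kappa>)}"
    hence x0: "x > 0" and all: "\<forall>\<kappa>>x. has_equilibrium \<Omega> \<kappa>" by auto
    show "x \<in> {K..}"
    proof (rule ccontr)
      assume "x \<notin> {K..}"
      hence xK: "x < K" by simp
      hence "has_equilibrium \<Omega> ((x+K)/2)" using all by simp
      hence "K \<le> (x+K)/2" using P2 x0 xK unfolding K_def by simp
      thus False using xK by simp
    qed
  next
    fix x assume "x \<in> {K..}"
    hence xK: "K \<le> x" by simp
    have "\<forall>\<kappa>>x. has_equilibrium \<Omega> \<kappa>" using P2 xK Kpos unfolding K_def by auto
    thus "x \<in> {\<kappa>s. \<kappa>s > 0 \<and> (\<forall>\<kappa>>\<kappa>s. has_equilibrium \<Omega> \<kappa>)}" using xK Kpos by simp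
  qed
  have P3: "kappa_c \<Omega> u = Inf {\<kappa>s. \<kappa>s > 0 \<and> (\<forall>\<kappa>>\<kappa>s. has_equilibrium \<Omega> \<kappa>)}"
    unfolding set K_def by simp
  define a where "a = 2*N - 1"
  define z where "z = (sqrt (4 * N^2 - 4 * N + 9) - a) / 4"
  note zf = z_facts[OF N1 a_def z_def]
  have a1: "a \<ge> 1" using N1 unfolding a_def by simp
  have z0: "0 \<le> z" "z < 1" using zf(2,3) by simp_all
  define w where "w = sqrt (1 - z^2)"
  have "z^2 < 1" using z0 abs_square_less_1[of z] by simp
  hence wpos: "0 < w" unfolding w_def by simp
  have wle: "w \<le> 1" unfolding w_def by simp
  have az: "a + z > 0" using a1 z0 by simp
  define L where "L = 16 * N * infnorm \<Omega> /
            ((6 * N - 3 + sqrt (4 * N^2 - 4 * N + 9))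
             * sqrt (5 - 2 * N + sqrt (4 * N^2 - 4 * N + 9))
             * sqrt (3 + 2 * N - sqrt (4 * N^2 - 4 * N + 9)))"
  have sw: "sqrt (1+z) * sqrt (1-z) = w" unfolding w_def
    by (simp add: real_sqrt_mult[symmetric] algebra_simps power2_eq_square)
  have den: "(6 * N - 3 + sqrt (4 * N^2 - 4 * N + 9))
             * sqrt (5 - 2 * N + sqrt (4 * N^2 - 4 * N + 9))
             * sqrt (3 + 2 * N - sqrt (4 * N^2 - 4 * N + 9)) = 16 * ((a + z) * w)"
    unfolding zf(4,5,6) sqrt4 using sw[symmetric] by (simp add: algebra_simps)
  have Lval: "L = N * m / ((a + z) * w)" unfolding L_def den m_def by simp
  have Nm: "N * m > 0" using N1 mpos by simp
  have B1: "2 * N * m / (4 * N - 1) \<le> L"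
  proof -
    have "(a + z) * w \<le> (a + z) * 1" using wle az by (intro mult_left_mono) auto
    also have "\<dots> \<le> (4 * N - 1) / 2" using zf(3) unfolding a_def by simp
    finally have le: "(a + z) * w \<le> (4 * N - 1) / 2" .
    have "N * m / ((4 * N - 1) / 2) \<le> N * m / ((a + z) * w)"
      using le Nm az wpos N1 by (intro divide_left_mono mult_pos_pos) auto
    thus ?thesis unfolding Lval by (simp add: mult.commute mult.left_commute)
  qed
  have i0sq: "(\<Omega>$i0)^2 = m^2" using i0 by (metis power2_abs)
  define su where "su = sqrt (1 - m^2/u^2)"
  have mu: "m \<le> u" using u_lo unfolding m_def by simp
  have "m^2/u^2 \<le> 1" using mu mpos by (simp add: power_mono)
  hence su0: "su \<ge> 0" unfolding su_def by simp
  define gu where "gu = real CARD('n) + (\<Sum>j\<in>UNIV. sqrt (1 - (\<Omega>$j)^2 / u^2))"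
  have gu: "gu > 0" unfolding gu_def using g_geN[OF ule upos] Npos by linarith
  have gule: "gu \<le> a + su" unfolding gu_def a_def su_def N_def
    using g_upper(1)[of \<Omega> u i0] i0sq by simp
  have kcu: "kappa_c \<Omega> u = N * u / gu" unfolding kappa_c_def gu_def N_def ..
  have B2: "L \<le> kappa_c \<Omega> u"
  proof -
    have lb: "m * (a + su) \<le> u * ((a + z) * w)"
      using LB[OF a1 z0(1) z0(2) zf(1) mpos mu] unfolding su_def w_def .
    have "N * m / ((a + z) * w) \<le> N * u / (a + su)"
      using lb az wpos su0 a1 N1 by (simp add: divide_simps mult.assoc mult_left_mono mult.commute mult.left_commute)
    also have "\<dots> \<le> N * u / gu"
      using gule gu N1 upos by (intro divide_left_mono) auto
    finally show ?thesis unfolding Lval kcu .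
  qed
  have s3: "sqrt 3 > 0" "(sqrt 3)^2 = 3" by simp_all
  have s32: "sqrt 3 < 2"
    by (rule real_less_lsqrt) auto
  define R1 where "R1 = 2 / sqrt 3 * m"
  have R1m: "m < R1" unfolding R1_def using s32 s3 mpos by (simp add: field_simps)
  have R1sq: "m^2 / R1^2 = 3/4" unfolding R1_def using s3 mpos
    by (simp add: power_divide power_mult_distrib)
  have R1b: "\<And>j. \<bar>\<Omega>$j\<bar> \<le> R1" using comp R1m by (meson less_imp_le order_trans)
  have R1pos: "R1 > 0" using R1m mpos by simp
  have half: "sqrt (1/4) = (1/2::real)" by (rule real_sqrt_unique) (auto simp: power2_eq_square)
  have termge: "sqrt (1 - (\<Omega>$j)^2 / R1^2) \<ge> 1/2" for j
  proof -
    have "(\<Omega>$j)^2 \<le> m^2" using comp[of j] abs_le_square_iff[of "\<Omega>$j" m] mpos by simp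
    hence "(\<Omega>$j)^2 / R1^2 \<le> m^2 / R1^2" by (simp add: divide_right_mono)
    hence "1/4 \<le> 1 - (\<Omega>$j)^2 / R1^2" using R1sq by simp
    hence "sqrt (1/4) \<le> sqrt (1 - (\<Omega>$j)^2 / R1^2)" by (rule real_sqrt_le_mono)
    thus ?thesis using half by simp
  qed
  define g1 where "g1 = real CARD('n) + (\<Sum>j\<in>UNIV. sqrt (1 - (\<Omega>$j)^2 / R1^2))"
  have g1ge: "g1 \<ge> N + N/2"
  proof -
    have "(\<Sum>j\<in>(UNIV::'n set). (1/2::real)) \<le> (\<Sum>j\<in>UNIV. sqrt (1 - (\<Omega>$j)^2 / R1^2))"
      by (intro sum_mono termge)
    thus ?thesis unfolding g1_def N_def by simp
  qed
  have kR1: "kappa_c \<Omega> R1 = N * R1 / g1" unfolding kappa_c_def g1_def N_def ..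
  have bound43: "4 / (3 * sqrt 3) * m = 2 * R1 / 3" unfolding R1_def by simp
  have B3: "kappa_c \<Omega> u \<le> 4 / (3 * sqrt 3) * m"
  proof -
    have "kappa_c \<Omega> u \<le> kappa_c \<Omega> R1" using kappa_mono(1)[OF R1b R1pos ulo u_eq] .
    also have "\<dots> \<le> N * R1 / (N + N/2)" unfolding kR1
      using g1ge N1 R1pos by (intro divide_left_mono) auto
    also have "\<dots> = 2 * R1 / 3" using N1 by (simp add: field_simps)
    finally show ?thesis using bound43 by simp
  qed
  have E1: "card {i. \<Omega>$i \<noteq> 0} \<le> 1 \<longrightarrow> L = kappa_c \<Omega> u"
  proof
    assume c1: "card {i. \<Omega>$i \<noteq> 0} \<le> 1"
    have others: "\<forall>j. j \<noteq> i0 \<longrightarrow> \<Omega>$j = 0"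
    proof (intro allI impI)
      fix j assume j1: "j \<noteq> i0"
      show "\<Omega>$j = 0"
      proof (rule ccontr)
      assume j2: "\<Omega>$j \<noteq> 0"
      note j = j1 j2
      have "\<Omega>$i0 \<noteq> 0" using i0 mpos by auto
      hence "{i0, j} \<subseteq> {i. \<Omega>$i \<noteq> 0}" using j by auto
      hence "card {i0, j} \<le> card {i. \<Omega>$i \<noteq> 0}" by (intro card_mono) auto
      thus False using c1 j by simp
      qed
    qed
    define R0 where "R0 = m / w"
    have R0m: "m \<le> R0" unfolding R0_def using wpos wle mpos by (simp add: field_simps)
    have R0pos: "R0 > 0" unfolding R0_def using wpos mpos by simp
    have R0b: "\<And>j. \<bar>\<Omega>$j\<bar> \<le> R0" using comp R0m order_trans by blast
    have "m^2 / R0^2 = w^2" unfolding R0_def using mpos wpos by (simp add: power_divide)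
    also have "\<dots> = 1 - z^2" unfolding w_def using \<open>z^2 < 1\<close> by simp
    finally have "sqrt (1 - m^2 / R0^2) = z" using z0 by simp
    hence gR0: "real CARD('n) + (\<Sum>j\<in>UNIV. sqrt (1 - (\<Omega>$j)^2 / R0^2)) = a + z"
      using g_upper(2)[of i0 \<Omega> R0, OF others] i0sq unfolding a_def N_def by simp
    have "kappa_c \<Omega> R0 = N * R0 / (a + z)" unfolding kappa_c_def gR0 N_def ..
    also have "\<dots> = L" unfolding Lval R0_def by simp
    finally have "kappa_c \<Omega> u \<le> L" using kappa_mono(1)[OF R0b R0pos ulo u_eq] by simp
    thus "L = kappa_c \<Omega> u" using B2 by simp
  qed
  have E2: "(\<forall>i. \<bar>\<Omega>$i\<bar> = infnorm \<Omega>) \<longrightarrow> kappa_c \<Omega> u = 4 / (3 * sqrt 3) * infnorm \<Omega>"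
  proof
    assume all: "\<forall>i. \<bar>\<Omega>$i\<bar> = infnorm \<Omega>"
    have t: "sqrt (1 - (\<Omega>$j)^2 / R1^2) = 1/2" for j
    proof -
      have "(\<Omega>$j)^2 = m^2" using all unfolding m_def by (metis power2_abs)
      hence e: "1 - (\<Omega>$j)^2 / R1^2 = 1/4" using R1sq by simp
      show ?thesis unfolding e by (rule half)
    qed
    have sumh: "(\<Sum>j\<in>UNIV. sqrt (1 - (\<Omega>$j)^2 / R1^2)) = N / 2" unfolding t N_def by simp
    have "ustar_eq \<Omega> R1" unfolding ustar_eq_def t using Npos by simp
    moreover have "infnorm \<Omega> < R1" "R1 \<le> 2 / sqrt 3 * infnorm \<Omega>"
      using R1m unfolding R1_def m_def by simp_all
    ultimately have "R1 = u" using P1u by blast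
    hence "kappa_c \<Omega> u = kappa_c \<Omega> R1" by simp
    also have "\<dots> = N * R1 / (N + N/2)" unfolding kR1 g1_def sumh N_def ..
    also have "\<dots> = 2 * R1 / 3" using N1 by (simp add: field_simps)
    finally show "kappa_c \<Omega> u = 4 / (3 * sqrt 3) * infnorm \<Omega>" using bound43 m_def by simp
  qed
  note B1' = B1[unfolded L_def m_def] and B2' = B2[unfolded L_def m_def]
    and B3' = B3[unfolded m_def] and E1' = E1[unfolded L_def m_def]
  show ?thesis
    apply (intro conjI)
           apply (fact P1)
          apply (fact P2)
         apply (fact P3)
        apply (fact B1')
       apply (fact B2')
      apply (fact B3')
     apply (fact E1')
    apply (fact E2)
    done
qed

end
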